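(* Assume (A1). Let $\alpha\in\mathbb R\setminus\{1\}$, $\eta>0$, $\kappa$ with $(\alpha-1)\kappa\ge0$, and let $\bar\mu\in\mathcal M_1(\mathsf T)$ with $\Psi_\alpha(\bar\mu)<\infty$ and $0<\bar\mu(\Gamma_\alpha(b_{\bar\mu,\alpha}+\kappa))<\infty$ be a fixed point of the Power Descent transition, $\mathcal I_\alpha(\bar\mu)=\bar\mu$. Then $\Psi_\alpha(\bar\mu)=\inf_{\zeta\in\mathcal M_{1,\bar\mu}(\mathsf T)}\Psi_\alpha(\zeta)$. Moreover, for every $\zeta\in\mathcal M_{1,\bar\mu}(\mathsf T)$, $\Psi_\alpha(\zeta)=\Psi_\alpha(\bar\mu)$ implies $\bar\mu K=\zeta K$.
   Context: Let $(\mathsf Y,\mathcal Y,\nu)$ be a measure space with $\nu$ $\sigma$-finite, $(\mathsf T,\mathcal T)$ a measurable space, $\mathcal M_1(\mathsf T)$ its probability measures and $\mathcal M_{1,\zeta}(\mathsf T)$ those dominated by $\zeta$. Let $k:\mathsf T\times\mathsf Y\to[0,\infty)$ be measurable with $\int k(\theta,y)\nu(dy)=1$, $K(\theta,A)=\int_Ak(\theta,y)\nu(dy)$, $\mu K(A)=\int\mu(d\theta)K(\theta,A)$, $\mu k(y)=\int\mu(d\theta)k(\theta,y)$, $\mu(g)=\int g\,d\mu$. Let $p$ be measurable positive on $\mathsf Y$. $f_0(u)=u-1-\log u$, $f_\alpha(u)=\frac{1}{\alpha(\alpha-1)}[u^\alpha-1-\alpha(u-1)]$ for $\alpha\notin\{0,1\}$,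 $f_\alpha'(u)=\frac{u^{\alpha-1}-1}{\alpha-1}$; $\Psi_\alpha(\mu)=\int f_\alpha(\mu k/p)p\,d\nu$; $b_{\mu,\alpha}(\theta)=\int k(\theta,y)f_\alpha'(\mu k(y)/p(y))\nu(dy)$. $\Gamma_\alpha(v)=[(\alpha-1)v+1]^{\eta/(1-\alpha)}$ and $\mathcal I_\alpha(\mu)(d\theta)=\frac{\mu(d\theta)\Gamma_\alpha(b_{\mu,\alpha}(\theta)+\kappa)}{\mu(\Gamma_\alpha(b_{\mu,\alpha}+\kappa))}$. Assumption (A1): $k>0$, $p>0$ everywhere and $\int p\,d\nu<\infty$. *)

theory Defs
  imports "HOL-Probability.Probability"
begin

definition f_alpha :: "real \<Rightarrow> real \<Rightarrow> real" where
  "f_alpha \<alpha> u = (if \<alpha> = 0 then u - 1 - ln u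
     else (1 / (\<alpha> * (\<alpha> - 1))) * (u powr \<alpha> - 1 - \<alpha> * (u - 1)))"

definition f_alpha' :: "real \<Rightarrow> real \<Rightarrow> real" where
  "f_alpha' \<alpha> u = (u powr (\<alpha> - 1) - 1) / (\<alpha> - 1)"

definition kernK :: "('b \<Rightarrow> 'a \<Rightarrow> real) \<Rightarrow> 'a measure \<Rightarrow> 'b \<Rightarrow> 'a set \<Rightarrow> ennreal" where
  "kernK k \<nu> \<theta> A = (\<integral>\<^sup>+ y \<in> A. ennreal (k \<theta> y) \<partial>\<nu>)"

definition muK :: "('b \<Rightarrow> 'a \<Rightarrow> real) \<Rightarrow> 'a measure \<Rightarrow> 'b measure \<Rightarrow> 'a set \<Rightarrow> ennreal" where
  "muK k \<nu> \<mu> A = (\<integral>\<^sup>+ \<theta>. kernK k \<nu> \<theta> A \<partial>\<mu>)"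

text \<open>mu k (y) = integral of k(theta, y) mu(dtheta)  (finite nu-a.e.; set to 0 where infinite).\<close>
definition muk :: "('b \<Rightarrow> 'a \<Rightarrow> real) \<Rightarrow> 'b measure \<Rightarrow> 'a \<Rightarrow> real" where
  "muk k \<mu> y = enn2real (\<integral>\<^sup>+ \<theta>. ennreal (k \<theta> y) \<partial>\<mu>)"

text \<open>Psi_alpha(mu) = integral of f_alpha(mu k / p) p d nu  (integrand is nonnegative).\<close>
definition Psi :: "real \<Rightarrow> ('b \<Rightarrow> 'a \<Rightarrow> real) \<Rightarrow> 'a measure \<Rightarrow> ('a \<Rightarrow> real) \<Rightarrow> 'b measure \<Rightarrow> ennreal" where
  "Psi \<alpha> k \<nu> p \<mu> = (\<integral>\<^sup>+ y. ennreal (f_alpha \<alpha> (muk k \<mu> y / p y) * p y) \<partial>\<nu>)"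

definition b_mu :: "real \<Rightarrow> ('b \<Rightarrow> 'a \<Rightarrow> real) \<Rightarrow> 'a measure \<Rightarrow> ('a \<Rightarrow> real) \<Rightarrow> 'b measure \<Rightarrow> 'b \<Rightarrow> ereal" where
  "b_mu \<alpha> k \<nu> p \<mu> \<theta> =
     enn2ereal (\<integral>\<^sup>+ y. ennreal (k \<theta> y * f_alpha' \<alpha> (muk k \<mu> y / p y)) \<partial>\<nu>)
   - enn2ereal (\<integral>\<^sup>+ y. ennreal (- (k \<theta> y * f_alpha' \<alpha> (muk k \<mu> y / p y))) \<partial>\<nu>)"

text \<open>Gamma_alpha(v) = ((alpha-1) v + 1) ^ (eta/(1-alpha)), extended to extended reals
  by the natural limiting values.\<close>
definition Gam :: "real \<Rightarrow> real \<Rightarrow> ereal \<Rightarrow> ennreal" where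
  "Gam \<alpha> \<eta> v = (case ereal (\<alpha> - 1) * v + 1 of
      ereal w \<Rightarrow> (if w > 0 then ennreal (w powr (\<eta> / (1 - \<alpha>)))
                 else if w = 0 \<and> \<eta> / (1 - \<alpha>) < 0 then \<infinity> else 0)
    | PInfty \<Rightarrow> (if \<eta> / (1 - \<alpha>) > 0 then \<infinity> else 0)
    | MInfty \<Rightarrow> 0)"

definition normI :: "real \<Rightarrow> real \<Rightarrow> real \<Rightarrow> ('b \<Rightarrow> 'a \<Rightarrow> real) \<Rightarrow> 'a measure \<Rightarrow> ('a \<Rightarrow> real) \<Rightarrow> 'b measure \<Rightarrow> ennreal" where
  "normI \<alpha> \<eta> \<kappa> k \<nu> p \<mu> = (\<integral>\<^sup>+ \<theta>. Gam \<alpha> \<eta> (b_mu \<alpha> k \<nu> p \<mu> \<theta> + ereal \<kappa>) \<partial>\<mu>)"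

definition I_alpha :: "real \<Rightarrow> real \<Rightarrow> real \<Rightarrow> ('b \<Rightarrow> 'a \<Rightarrow> real) \<Rightarrow> 'a measure \<Rightarrow> ('a \<Rightarrow> real) \<Rightarrow> 'b measure \<Rightarrow> 'b measure" where
  "I_alpha \<alpha> \<eta> \<kappa> k \<nu> p \<mu> = density \<mu> (\<lambda>\<theta>. Gam \<alpha> \<eta> (b_mu \<alpha> k \<nu> p \<mu> \<theta> + ereal \<kappa>) / normI \<alpha> \<eta> \<kappa> k \<nu> p \<mu>)"

definition M1_dom :: "'b measure \<Rightarrow> 'b measure \<Rightarrow> 'b measure set" where
  "M1_dom T \<zeta> = {\<mu>. prob_space \<mu> \<and> sets \<mu> = sets T \<and> absolutely_continuous \<zeta> \<mu>}"

end

theory Submission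
  imports Defs
begin

lemma fa_deriv:
  assumes "\<alpha> \<noteq> 1" "x > 0"
  shows "(f_alpha \<alpha> has_real_derivative f_alpha' \<alpha> x) (at x)"
proof (cases "\<alpha> = 0")
  case True
  have e: "f_alpha' \<alpha> x = 1 - 0 - 1/x" using True assms
    by (simp add: f_alpha'_def powr_minus field_simps)
  have "((\<lambda>u. u - 1 - ln u) has_real_derivative 1 - 0 - 1/x) (at x)"
    using assms by (auto intro!: derivative_eq_intros simp: field_simps)
  moreover have "f_alpha \<alpha> = (\<lambda>u. u - 1 - ln u)" using True by (auto simp: f_alpha_def fun_eq_iff)
  ultimately show ?thesis unfolding e by simp
next
  case False
  have "((\<lambda>u. (1 / (\<alpha> * (\<alpha> - 1))) * (u powr \<alpha> - 1 - \<alpha> * (u - 1))) has_real_derivative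
      (1 / (\<alpha> * (\<alpha> - 1))) * (\<alpha> * x powr (\<alpha> - 1) - 0 - \<alpha> * (1 - 0))) (at x)"
    using assms by (intro DERIV_cmult DERIV_diff DERIV_cmult has_real_derivative_powr DERIV_const DERIV_ident) auto
  moreover have "f_alpha \<alpha> = (\<lambda>u. (1 / (\<alpha> * (\<alpha> - 1))) * (u powr \<alpha> - 1 - \<alpha> * (u - 1)))"
    using False by (auto simp: f_alpha_def fun_eq_iff)
  moreover have "(1 / (\<alpha> * (\<alpha> - 1))) * (\<alpha> * x powr (\<alpha> - 1) - 0 - \<alpha> * (1 - 0)) = f_alpha' \<alpha> x"
    using False assms by (simp add: f_alpha'_def field_simps)
  ultimately show ?thesis by simp
qed

lemma fa'_mono:
  assumes "\<alpha> \<noteq> 1" "0 < x" "x < y"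
  shows "f_alpha' \<alpha> x < f_alpha' \<alpha> y"
proof (cases "\<alpha> > 1")
  case True
  have "x powr (\<alpha> - 1) < y powr (\<alpha> - 1)" using True assms by (intro powr_less_mono2) auto
  then show ?thesis using True by (simp add: f_alpha'_def divide_strict_right_mono)
next
  case False
  hence a: "\<alpha> < 1" using assms by auto
  have "y powr (\<alpha> - 1) < x powr (\<alpha> - 1)" using a assms by (intro powr_less_mono2_neg) auto
  then show ?thesis using a by (simp add: f_alpha'_def divide_strict_right_mono_neg)
qed

lemma fa_tangent_strict:
  assumes "\<alpha> \<noteq> 1" "s > 0" "t > 0" "t \<noteq> s"
  shows "f_alpha \<alpha> t > f_alpha \<alpha> s + f_alpha' \<alpha> s * (t - s)"
proof (cases "s < t")
  case True
  obtain z where z: "s < z" "z < t" "f_alpha \<alpha> t - f_alpha \<alpha> s = (t - s) * f_alpha' \<alpha> z"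
    using MVT2[of s t "f_alpha \<alpha>" "f_alpha' \<alpha>"] True assms fa_deriv by force
  have "f_alpha' \<alpha> s < f_alpha' \<alpha> z" using fa'_mono assms z by auto
  hence "(t - s) * f_alpha' \<alpha> s < (t - s) * f_alpha' \<alpha> z" using True by (intro mult_strict_left_mono) auto
  then show ?thesis using z by (simp add: algebra_simps)
next
  case False
  hence st: "t < s" using assms by auto
  obtain z where z: "t < z" "z < s" "f_alpha \<alpha> s - f_alpha \<alpha> t = (s - t) * f_alpha' \<alpha> z"
    using MVT2[of t s "f_alpha \<alpha>" "f_alpha' \<alpha>"] st assms fa_deriv by force
  have "f_alpha' \<alpha> z < f_alpha' \<alpha> s" using fa'_mono assms z by auto
  hence "(s - t) * f_alpha' \<alpha> z < (s - t) * f_alpha' \<alpha> s" using st by (intro mult_strict_left_mono) auto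
  then show ?thesis using z by (simp add: algebra_simps)
qed

lemma fa_tangent:
  assumes "\<alpha> \<noteq> 1" "s > 0" "t > 0"
  shows "f_alpha \<alpha> t \<ge> f_alpha \<alpha> s + f_alpha' \<alpha> s * (t - s)"
  using fa_tangent_strict[OF assms] by (cases "t = s") auto

lemma fa_nonneg:
  assumes "\<alpha> \<noteq> 1" "t > 0"
  shows "f_alpha \<alpha> t \<ge> 0"
proof -
  have "f_alpha \<alpha> 1 = 0" "f_alpha' \<alpha> 1 = 0" by (auto simp: f_alpha_def f_alpha'_def)
  with fa_tangent[OF assms(1) _ assms(2), of 1] show ?thesis by simp
qed

locale PD =
  fixes \<nu> :: "'a measure" and T :: "'b measure" and k :: "'b \<Rightarrow> 'a \<Rightarrow> real"
  assumes sf: "sigma_finite_measure \<nu>"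
    and k_meas: "(\<lambda>(\<theta>, y). k \<theta> y) \<in> borel_measurable (T \<Otimes>\<^sub>M \<nu>)"
    and k_pos: "\<And>\<theta> y. \<theta> \<in> space T \<Longrightarrow> y \<in> space \<nu> \<Longrightarrow> k \<theta> y > 0"
    and k_int: "\<And>\<theta>. \<theta> \<in> space T \<Longrightarrow> (\<integral>\<^sup>+ y. ennreal (k \<theta> y) \<partial>\<nu>) = 1"
begin

context
  fixes Q assumes Qp: "prob_space Q" and Qs: "sets Q = sets T"
begin

interpretation Q: prob_space Q by (rule Qp)
interpretation N: sigma_finite_measure \<nu> by (rule sf)
interpretation QN: pair_sigma_finite Q \<nu> by unfold_locales

lemma spQ: "space Q = space T" using Qs by (rule sets_eq_imp_space_eq)

lemma kQ_meas[measurable]: "(\<lambda>(\<theta>, y). k \<theta> y) \<in> borel_measurable (Q \<Otimes>\<^sub>M \<nu>)"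
proof -
  have "sets (Q \<Otimes>\<^sub>M \<nu>) = sets (T \<Otimes>\<^sub>M \<nu>)" by (rule sets_pair_measure_cong[OF Qs refl])
  from measurable_cong_sets[OF this refl, of "borel :: real measure"] k_meas show ?thesis by simp
qed

lemma kQ_meas': "(\<lambda>x. k (fst x) (snd x)) \<in> borel_measurable (Q \<Otimes>\<^sub>M \<nu>)"
  using kQ_meas by (simp add: case_prod_beta')

lemma intk_meas[measurable]: "(\<lambda>y. \<integral>\<^sup>+\<theta>. ennreal (k \<theta> y) \<partial>Q) \<in> borel_measurable \<nu>"
proof -
  have "(\<lambda>(y, \<theta>). ennreal (k \<theta> y)) \<in> borel_measurable (\<nu> \<Otimes>\<^sub>M Q)"
    using measurable_pair_swap[OF kQ_meas'] by (simp add: case_prod_beta')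
  then show ?thesis by (rule Q.borel_measurable_nn_integral)
qed

lemma muk_meas[measurable]: "muk k Q \<in> borel_measurable \<nu>"
  unfolding muk_def[abs_def] by measurable

lemma tonelli_h:
  assumes h[measurable]: "h \<in> borel_measurable \<nu>"
  shows "(\<integral>\<^sup>+\<theta>. (\<integral>\<^sup>+y. ennreal (k \<theta> y * h y) \<partial>\<nu>) \<partial>Q)
     = (\<integral>\<^sup>+y. (\<integral>\<^sup>+\<theta>. ennreal (k \<theta> y) \<partial>Q) * ennreal (h y) \<partial>\<nu>)"
proof -
  have m: "(\<lambda>(\<theta>, y). ennreal (k \<theta> y * h y)) \<in> borel_measurable (Q \<Otimes>\<^sub>M \<nu>)"
    using kQ_meas' by (simp add: case_prod_beta') measurable
  have "(\<integral>\<^sup>+\<theta>. (\<integral>\<^sup>+y. ennreal (k \<theta> y * h y) \<partial>\<nu>) \<partial>Q)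
      = (\<integral>\<^sup>+y. (\<integral>\<^sup>+\<theta>. ennreal (k \<theta> y * h y) \<partial>Q) \<partial>\<nu>)"
    using QN.Fubini'[OF m] by simp
  also have "\<dots> = (\<integral>\<^sup>+y. (\<integral>\<^sup>+\<theta>. ennreal (k \<theta> y) * ennreal (h y) \<partial>Q) \<partial>\<nu>)"
    using k_pos spQ by (intro nn_integral_cong) (auto simp: ennreal_mult' less_imp_le)
  also have "\<dots> = (\<integral>\<^sup>+y. (\<integral>\<^sup>+\<theta>. ennreal (k \<theta> y) \<partial>Q) * ennreal (h y) \<partial>\<nu>)"
  proof (intro nn_integral_cong nn_integral_multc)
    fix y assume "y \<in> space \<nu>"
    then show "(\<lambda>\<theta>. ennreal (k \<theta> y)) \<in> borel_measurable Q"
      using kQ_meas' by measurable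
  qed
  finally show ?thesis .
qed

lemma intk_one: "(\<integral>\<^sup>+y. (\<integral>\<^sup>+\<theta>. ennreal (k \<theta> y) \<partial>Q) \<partial>\<nu>) = 1"
proof -
  have "(\<integral>\<^sup>+y. (\<integral>\<^sup>+\<theta>. ennreal (k \<theta> y) \<partial>Q) \<partial>\<nu>) = (\<integral>\<^sup>+y. (\<integral>\<^sup>+\<theta>. ennreal (k \<theta> y) \<partial>Q) * ennreal 1 \<partial>\<nu>)"
    by simp
  also have "\<dots> = (\<integral>\<^sup>+\<theta>. (\<integral>\<^sup>+y. ennreal (k \<theta> y * 1) \<partial>\<nu>) \<partial>Q)"
    by (rule tonelli_h[symmetric]) simp
  also have "\<dots> = (\<integral>\<^sup>+\<theta>. 1 \<partial>Q)"
    using k_int spQ by (intro nn_integral_cong) auto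
  also have "\<dots> = 1" by (simp add: Q.emeasure_space_1)
  finally show ?thesis .
qed

lemma muk_AE: "AE y in \<nu>. 0 < muk k Q y \<and> ennreal (muk k Q y) = (\<integral>\<^sup>+\<theta>. ennreal (k \<theta> y) \<partial>Q)"
proof -
  have "AE y in \<nu>. (\<integral>\<^sup>+\<theta>. ennreal (k \<theta> y) \<partial>Q) \<noteq> \<infinity>"
    using intk_one by (intro nn_integral_PInf_AE) auto
  then show ?thesis
  proof (rule AE_mp, intro AE_I2 impI)
    fix y assume y: "y \<in> space \<nu>" and fin: "(\<integral>\<^sup>+\<theta>. ennreal (k \<theta> y) \<partial>Q) \<noteq> \<infinity>"
    have mk: "(\<lambda>\<theta>. ennreal (k \<theta> y)) \<in> borel_measurable Q"
      using kQ_meas' y by measurable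
    have "(\<integral>\<^sup>+\<theta>. ennreal (k \<theta> y) \<partial>Q) \<noteq> 0"
    proof
      assume "(\<integral>\<^sup>+\<theta>. ennreal (k \<theta> y) \<partial>Q) = 0"
      then have "AE \<theta> in Q. ennreal (k \<theta> y) = 0" using nn_integral_0_iff_AE[OF mk] by simp
      moreover have "AE \<theta> in Q. ennreal (k \<theta> y) \<noteq> 0"
        using y spQ by (intro AE_I2) (metis k_pos ennreal_eq_0_iff not_le)
      ultimately have "AE \<theta> in Q. False" by eventually_elim auto
      then show False by simp
    qed
    then show "0 < muk k Q y \<and> ennreal (muk k Q y) = (\<integral>\<^sup>+\<theta>. ennreal (k \<theta> y) \<partial>Q)"
      using fin unfolding muk_def
      by (cases "(\<integral>\<^sup>+\<theta>. ennreal (k \<theta> y) \<partial>Q)") (auto simp: enn2real_positive_iff)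
  qed
qed

lemma tonelli_muk:
  assumes h[measurable]: "h \<in> borel_measurable \<nu>"
  shows "(\<integral>\<^sup>+\<theta>. (\<integral>\<^sup>+y. ennreal (k \<theta> y * h y) \<partial>\<nu>) \<partial>Q) = (\<integral>\<^sup>+y. ennreal (muk k Q y * h y) \<partial>\<nu>)"
  unfolding tonelli_h[OF h]
  by (intro nn_integral_cong_AE, use muk_AE in eventually_elim) (auto simp: ennreal_mult')

lemma muk_int: "(\<integral>\<^sup>+y. ennreal (muk k Q y) \<partial>\<nu>) = 1"
  unfolding intk_one[symmetric]
  using muk_AE by (intro nn_integral_cong_AE) auto

lemma muK_eq:
  assumes A: "A \<in> sets \<nu>"
  shows "muK k \<nu> Q A = (\<integral>\<^sup>+y. ennreal (muk k Q y * indicator A y) \<partial>\<nu>)"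
proof -
  have "muK k \<nu> Q A = (\<integral>\<^sup>+\<theta>. (\<integral>\<^sup>+y. ennreal (k \<theta> y * indicator A y) \<partial>\<nu>) \<partial>Q)"
    unfolding muK_def kernK_def
    by (intro nn_integral_cong) (auto simp: indicator_def)
  also have "\<dots> = (\<integral>\<^sup>+y. ennreal (muk k Q y * indicator A y) \<partial>\<nu>)"
    using A by (intro tonelli_muk borel_measurable_indicator)
  finally show ?thesis .
qed

end
end

lemma ar_pos:
  fixes P Q B :: ennreal
  assumes e: "P + ennreal c = B + Q" and Q: "Q \<noteq> \<infinity>" and a: "\<alpha> > 1" and c: "c = 1/(\<alpha>-1)"
  shows "ereal (\<alpha>-1) * (enn2ereal P - enn2ereal Q + ereal \<kappa>) + 1 = ereal (\<alpha>-1) * enn2ereal B + ereal((\<alpha>-1)*\<kappa>)"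
proof -
  obtain q where q: "Q = ennreal q" "q \<ge> 0" using Q by (cases Q) auto
  have c0: "c > 0" using a c by simp
  show ?thesis
  proof (cases P)
    case top
    then have "B = \<infinity>" using e q by (cases B) (auto simp: ennreal_plus[symmetric] simp del: ennreal_plus)
    then show ?thesis using top q a by simp
  next
    case (real pr)
    obtain b where b: "B = ennreal b" "b \<ge> 0" using e q real by (cases B) (auto simp: ennreal_plus[symmetric] simp del: ennreal_plus)
    have "ennreal (pr + c) = ennreal (b + q)" using e q real b c0 by (simp add: ennreal_plus)
    then have "pr + c = b + q" using real b q c0 by (subst (asm) ennreal_inj) auto
    then show ?thesis using real b q a c by (simp add: field_simps)
  qed
qed

lemma ar_neg:
  fixes P Q B :: ennreal
  assumes e: "Q + ennreal c = B + P" and P: "P \<noteq> \<infinity>" and a: "\<alpha> < 1" and c: "c = 1/(1-\<alpha>)"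
  shows "ereal (\<alpha>-1) * (enn2ereal P - enn2ereal Q + ereal \<kappa>) + 1 = ereal (1-\<alpha>) * enn2ereal B + ereal((\<alpha>-1)*\<kappa>)"
proof -
  obtain q where q: "P = ennreal q" "q \<ge> 0" using P by (cases P) auto
  have c0: "c > 0" using a c by simp
  show ?thesis
  proof (cases Q)
    case top
    then have "B = \<infinity>" using e q by (cases B) (auto simp: ennreal_plus[symmetric] simp del: ennreal_plus)
    then show ?thesis using top q a by simp
  next
    case (real pr)
    obtain b where b: "B = ennreal b" "b \<ge> 0" using e q real by (cases B) (auto simp: ennreal_plus[symmetric] simp del: ennreal_plus)
    have "ennreal (pr + c) = ennreal (b + q)" using e q real b c0 by (simp add: ennreal_plus)
    then have "pr + c = b + q" using real b q c0 by (subst (asm) ennreal_inj) auto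
    then show ?thesis using real b q a c by (simp add: field_simps)
  qed
qed

lemma nn_split:
  assumes [measurable]: "x \<in> borel_measurable N" "y \<in> borel_measurable N"
    and nn: "\<And>t. t \<in> space N \<Longrightarrow> x t \<ge> 0" "\<And>t. t \<in> space N \<Longrightarrow> y t \<ge> 0"
  shows "(\<integral>\<^sup>+t. ennreal (x t - y t) \<partial>N) + (\<integral>\<^sup>+t. ennreal (y t) \<partial>N)
       = (\<integral>\<^sup>+t. ennreal (x t) \<partial>N) + (\<integral>\<^sup>+t. ennreal (y t - x t) \<partial>N)"
proof -
  have "(\<integral>\<^sup>+t. ennreal (x t - y t) \<partial>N) + (\<integral>\<^sup>+t. ennreal (y t) \<partial>N)
      = (\<integral>\<^sup>+t. ennreal (x t - y t) + ennreal (y t) \<partial>N)"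
    by (rule nn_integral_add[symmetric]) auto
  also have "\<dots> = (\<integral>\<^sup>+t. ennreal (x t) + ennreal (y t - x t) \<partial>N)"
  proof (intro nn_integral_cong)
    fix t assume t: "t \<in> space N"
    show "ennreal (x t - y t) + ennreal (y t) = ennreal (x t) + ennreal (y t - x t)"
    proof (cases "x t \<le> y t")
      case True
      then show ?thesis using nn[OF t] by (simp add: ennreal_eq_0_iff ennreal_plus[symmetric] del: ennreal_plus)
    next
      case False
      then show ?thesis using nn[OF t] by (simp add: ennreal_eq_0_iff ennreal_plus[symmetric] del: ennreal_plus)
    qed
  qed
  also have "\<dots> = (\<integral>\<^sup>+t. ennreal (x t) \<partial>N) + (\<integral>\<^sup>+t. ennreal (y t - x t) \<partial>N)"
    by (rule nn_integral_add) auto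
  finally show ?thesis .
qed

context PD begin

lemma b_rel:
  assumes al: "\<alpha> \<noteq> 1" and p_meas[measurable]: "p \<in> borel_measurable \<nu>"
    and Mp: "prob_space M" and Ms: "sets M = sets T" and th: "\<theta> \<in> space T"
  shows "ereal (\<alpha>-1) * (b_mu \<alpha> k \<nu> p M \<theta> + ereal \<kappa>) + 1
     = ereal \<bar>\<alpha>-1\<bar> * enn2ereal (\<integral>\<^sup>+y. ennreal (k \<theta> y * ((muk k M y / p y) powr (\<alpha>-1) / \<bar>\<alpha>-1\<bar>)) \<partial>\<nu>)
       + ereal((\<alpha>-1)*\<kappa>)"
proof -
  define r where "r y = (muk k M y / p y) powr (\<alpha>-1)" for y
  define c where "c = 1/\<bar>\<alpha>-1\<bar>"
  have c0: "c > 0" using al by (simp add: c_def)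
  have mM[measurable]: "muk k M \<in> borel_measurable \<nu>" by (rule muk_meas[OF Mp Ms])
  have rm[measurable]: "r \<in> borel_measurable \<nu>" unfolding r_def[abs_def] by measurable
  have r0: "r y \<ge> 0" for y by (simp add: r_def)
  have km[measurable]: "(\<lambda>y. k \<theta> y) \<in> borel_measurable \<nu>"
    using measurable_Pair2[OF k_meas th] by simp
  have kp: "y \<in> space \<nu> \<Longrightarrow> k \<theta> y > 0" for y using k_pos th by simp
  have kc: "(\<integral>\<^sup>+y. ennreal (k \<theta> y * c) \<partial>\<nu>) = ennreal c"
  proof -
    have "(\<integral>\<^sup>+y. ennreal (k \<theta> y * c) \<partial>\<nu>) = (\<integral>\<^sup>+y. ennreal (k \<theta> y) * ennreal c \<partial>\<nu>)"
      using c0 by (simp add: ennreal_mult'')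
    also have "\<dots> = ennreal c" using k_int[OF th] by (simp add: nn_integral_multc)
    finally show ?thesis .
  qed
  have bG: "(\<integral>\<^sup>+y. ennreal (k \<theta> y * ((muk k M y / p y) powr (\<alpha>-1) / \<bar>\<alpha>-1\<bar>)) \<partial>\<nu>)
      = (\<integral>\<^sup>+y. ennreal (k \<theta> y * r y * c) \<partial>\<nu>)"
    by (simp add: r_def c_def)
  have g: "f_alpha' \<alpha> (muk k M y / p y) = (r y - 1) / (\<alpha> - 1)" for y
    by (simp add: f_alpha'_def r_def)
  have mono: "(\<integral>\<^sup>+y. ennreal (k \<theta> y * c - k \<theta> y * r y * c) \<partial>\<nu>) \<le> (\<integral>\<^sup>+y. ennreal (k \<theta> y * c) \<partial>\<nu>)"
  proof (intro nn_integral_mono ennreal_leI)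
    fix y assume "y \<in> space \<nu>"
    then show "k \<theta> y * c - k \<theta> y * r y * c \<le> k \<theta> y * c" using kp[of y] r0[of y] c0 by simp
  qed
  have split: "(\<integral>\<^sup>+y. ennreal (k \<theta> y * r y * c - k \<theta> y * c) \<partial>\<nu>) + ennreal c
      = (\<integral>\<^sup>+y. ennreal (k \<theta> y * r y * c) \<partial>\<nu>) + (\<integral>\<^sup>+y. ennreal (k \<theta> y * c - k \<theta> y * r y * c) \<partial>\<nu>)"
    using nn_split[of "\<lambda>y. k \<theta> y * r y * c" \<nu> "\<lambda>y. k \<theta> y * c"] kp r0 c0 kc
    by (simp add: less_imp_le)
  have Qfin: "(\<integral>\<^sup>+y. ennreal (k \<theta> y * c - k \<theta> y * r y * c) \<partial>\<nu>) \<noteq> \<infinity>"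
  proof
    assume "(\<integral>\<^sup>+y. ennreal (k \<theta> y * c - k \<theta> y * r y * c) \<partial>\<nu>) = \<infinity>"
    with mono kc have "\<infinity> \<le> ennreal c" by simp
    then show False by (simp add: top_unique)
  qed
  show ?thesis
  proof (cases "\<alpha> > 1")
    case True
    have kg: "k \<theta> y * f_alpha' \<alpha> (muk k M y / p y) = k \<theta> y * r y * c - k \<theta> y * c" for y
    proof -
      have a: "\<bar>\<alpha>-1\<bar> = \<alpha>-1" "\<alpha> - 1 \<noteq> 0" using True by auto
      show ?thesis unfolding g c_def a(1) by (simp add: diff_divide_distrib algebra_simps)
    qed
    have ab: "\<bar>\<alpha>-1\<bar> = \<alpha>-1" using True by simp
    show ?thesis apply (unfold b_mu_def kg bG minus_diff_eq) apply (unfold ab)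
      by (rule ar_pos[OF split Qfin]) (use True in \<open>auto simp: c_def\<close>)
  next
    case False
    hence a1: "\<alpha> < 1" using al by simp
    have kg: "k \<theta> y * f_alpha' \<alpha> (muk k M y / p y) = k \<theta> y * c - k \<theta> y * r y * c" for y
    proof -
      have a: "\<bar>\<alpha>-1\<bar> = 1-\<alpha>" "\<alpha> - 1 \<noteq> 0" "1 - \<alpha> \<noteq> 0" using a1 by auto
      have e: "(r y - 1)/(\<alpha>-1) = (1 - r y)/(1-\<alpha>)" by (metis minus_diff_eq minus_divide_divide)
      show ?thesis unfolding g c_def a(1) e by (simp add: diff_divide_distrib algebra_simps)
    qed
    have abs: "\<bar>\<alpha>-1\<bar> = 1 - \<alpha>" using a1 by simp
    show ?thesis apply (unfold b_mu_def kg bG minus_diff_eq) apply (unfold abs)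
      by (rule ar_neg[OF split Qfin]) (use a1 in \<open>auto simp: c_def\<close>)
  qed
qed

end

definition Hf :: "real \<Rightarrow> real \<Rightarrow> real \<Rightarrow> ennreal \<Rightarrow> ennreal" where
 "Hf a d e B = (if B = \<infinity> then (if e > 0 then \<infinity> else 0)
    else if a * enn2real B + d > 0 then ennreal ((a * enn2real B + d) powr e)
    else if a * enn2real B + d = 0 \<and> e < 0 then \<infinity> else 0)"

lemma Hf_meas[measurable]: "Hf a d e \<in> borel_measurable borel"
  unfolding Hf_def[abs_def] by measurable

lemma f_alpha_meas[measurable]: "f_alpha \<alpha> \<in> borel_measurable borel"
  unfolding f_alpha_def[abs_def] by measurable

lemma f_alpha'_meas[measurable]: "f_alpha' \<alpha> \<in> borel_measurable borel"
  unfolding f_alpha'_def[abs_def] by measurable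

lemma Gam_H:
  assumes "ereal (\<alpha>-1) * v + 1 = ereal a * enn2ereal B + ereal d" "a > 0" "d \<ge> 0"
  shows "Gam \<alpha> \<eta> v = Hf a d (\<eta>/(1-\<alpha>)) B"
proof (cases B)
  case top
  then show ?thesis using assms(2,3) unfolding Gam_def Hf_def assms(1) by simp
next
  case (real r)
  then have "ereal (\<alpha>-1) * v + 1 = ereal (a * r + d)" using assms by simp
  then show ?thesis using real assms unfolding Gam_def Hf_def by simp
qed

lemma Hf_eq:
  assumes "Hf a d e B = N" "0 < N" "N < \<infinity>" "e \<noteq> 0" "a > 0"
  shows "B = ennreal (((enn2real N) powr (1/e) - d) / a)"
proof -
  have B: "B \<noteq> \<infinity>" using assms unfolding Hf_def by (auto split: if_splits)
  define w where "w = a * enn2real B + d"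
  have w: "w > 0" "ennreal (w powr e) = N" using assms B unfolding Hf_def w_def[symmetric]
    by (auto split: if_splits)
  have "w powr e = enn2real N" using w(2)[symmetric] by simp
  moreover have "(w powr e) powr (1/e) = w" using w(1) assms(4) by (simp add: powr_powr)
  ultimately have "w = (enn2real N) powr (1/e)" by simp
  then have "enn2real B = ((enn2real N) powr (1/e) - d) / a" using assms(5) unfolding w_def by (simp add: field_simps)
  moreover have "B = ennreal (enn2real B)" using B by (simp add: ennreal_enn2real_if)
  ultimately show ?thesis by simp
qed

lemma ptw_alg1:
  fixes a :: real assumes "a \<noteq> 0"
  shows "Fv + u * (r / a) + v * (1 / a) = Fu + v * (r / a) + u * (1 / a) + (Fv - Fu - (r - 1) / a * (v - u))"
proof -
  have "(r - 1) / a * (v - u) = v * (r / a) + u * (1 / a) - u * (r / a) - v * (1 / a)"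
    using assms by (simp add: field_simps)
  then show ?thesis by simp
qed

lemma ptw_alg2:
  fixes a :: real assumes "a \<noteq> 0"
  shows "Fv + v * (r / a) + u * (1 / a) = Fu + u * (r / a) + v * (1 / a) + (Fv - Fu - (r - 1) / (- a) * (v - u))"
proof -
  have "(r - 1) / (- a) * (v - u) = u * (r / a) + v * (1 / a) - v * (r / a) - u * (1 / a)"
    using assms by (simp add: field_simps)
  then show ?thesis by simp
qed

lemma ptwise:
  assumes al: "\<alpha> \<noteq> 1" and pos: "u > 0" "v > 0" "p > 0" and a: "a = \<bar>\<alpha>-1\<bar>"
    and G: "G = (u/p) powr (\<alpha>-1) / a"
    and D: "D = p * (f_alpha \<alpha> (v/p) - f_alpha \<alpha> (u/p) - f_alpha' \<alpha> (u/p) * (v/p - u/p))"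
  shows "\<alpha> > 1 \<Longrightarrow> f_alpha \<alpha> (v/p) * p + u * G + v * (1/a) = f_alpha \<alpha> (u/p) * p + v * G + u * (1/a) + D"
    and "\<alpha> < 1 \<Longrightarrow> f_alpha \<alpha> (v/p) * p + v * G + u * (1/a) = f_alpha \<alpha> (u/p) * p + u * G + v * (1/a) + D"
proof -
  define r where "r = (u/p) powr (\<alpha>-1)"
  define g where "g = (r - 1)/(\<alpha>-1)"
  have gg: "f_alpha' \<alpha> (u/p) = g" unfolding g_def r_def f_alpha'_def ..
  have p1: "p * (v/p - u/p) = v - u" using pos by (simp add: right_diff_distrib)
  have pp: "p * (g * (v/p - u/p)) = g * (v - u)" using p1 by (metis mult.left_commute)
  have D': "D = f_alpha \<alpha> (v/p) * p - f_alpha \<alpha> (u/p) * p - g * (v - u)"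
    unfolding D gg pp[symmetric] by (simp only: right_diff_distrib mult.commute)
  show "\<alpha> > 1 \<Longrightarrow> f_alpha \<alpha> (v/p) * p + u * G + v * (1/a) = f_alpha \<alpha> (u/p) * p + v * G + u * (1/a) + D"
  proof -
    assume "\<alpha> > 1"
    then have e: "\<alpha> - 1 = a" "a \<noteq> 0" using a by auto
    show ?thesis unfolding D' G g_def unfolding r_def[symmetric] unfolding e(1) by (rule ptw_alg1[OF e(2)])
  qed
  show "\<alpha> < 1 \<Longrightarrow> f_alpha \<alpha> (v/p) * p + v * G + u * (1/a) = f_alpha \<alpha> (u/p) * p + u * G + v * (1/a) + D"
  proof -
    assume "\<alpha> < 1"
    then have e: "\<alpha> - 1 = - a" "a \<noteq> 0" using a by auto
    show ?thesis unfolding D' G g_def unfolding r_def[symmetric] unfolding e(1) by (rule ptw_alg2[OF e(2)])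
  qed
qed

lemma D_nonneg:
  assumes al: "\<alpha> \<noteq> 1" and pos: "u > 0" "v > 0" "p > 0"
  shows "p * (f_alpha \<alpha> (v/p) - f_alpha \<alpha> (u/p) - f_alpha' \<alpha> (u/p) * (v/p - u/p)) \<ge> 0"
proof -
  have "0 \<le> f_alpha \<alpha> (v/p) - f_alpha \<alpha> (u/p) - f_alpha' \<alpha> (u/p) * (v/p - u/p)"
    using fa_tangent[OF al, of "u/p" "v/p"] pos by simp
  then show ?thesis using pos by (intro mult_nonneg_nonneg) auto
qed

lemma D_pos:
  assumes al: "\<alpha> \<noteq> 1" and pos: "u > 0" "v > 0" "p > 0" "u \<noteq> v"
  shows "p * (f_alpha \<alpha> (v/p) - f_alpha \<alpha> (u/p) - f_alpha' \<alpha> (u/p) * (v/p - u/p)) > 0"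
proof -
  have "v/p \<noteq> u/p" using pos by (simp add: divide_cancel_right)
  then have "0 < f_alpha \<alpha> (v/p) - f_alpha \<alpha> (u/p) - f_alpha' \<alpha> (u/p) * (v/p - u/p)"
    using fa_tangent_strict[OF al, of "u/p" "v/p"] pos by simp
  then show ?thesis using pos by (intro mult_pos_pos) auto
qed

lemma enn_sum3:
  assumes "x1 + x2 + x3 = y1 + y2 + y3 + y4" "x1 \<ge> 0" "x2 \<ge> 0" "x3 \<ge> 0" "y1 \<ge> 0" "y2 \<ge> 0" "y3 \<ge> 0" "y4 \<ge> (0::real)"
  shows "ennreal x1 + ennreal x2 + ennreal x3 = ennreal y1 + ennreal y2 + ennreal y3 + ennreal y4"
proof -
  have "ennreal x1 + ennreal x2 + ennreal x3 = ennreal (x1 + x2 + x3)" using assms(2-4) by simp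
  also have "\<dots> = ennreal (y1 + y2 + y3 + y4)" using assms(1) by (rule arg_cong)
  also have "\<dots> = ennreal y1 + ennreal y2 + ennreal y3 + ennreal y4" using assms(5-8) by simp
  finally show ?thesis .
qed

lemma nn_add3:
  assumes f: "f \<in> borel_measurable M" and g: "g \<in> borel_measurable M" and h: "h \<in> borel_measurable M"
  shows "(\<integral>\<^sup>+x. f x + g x + h x \<partial>M) = integral\<^sup>N M f + integral\<^sup>N M g + integral\<^sup>N M h"
proof -
  have "(\<integral>\<^sup>+x. f x + g x + h x \<partial>M) = (\<integral>\<^sup>+x. f x + g x \<partial>M) + integral\<^sup>N M h"
    by (rule nn_integral_add[OF borel_measurable_add[OF f g] h])
  also have "(\<integral>\<^sup>+x. f x + g x \<partial>M) = integral\<^sup>N M f + integral\<^sup>N M g"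
    by (rule nn_integral_add[OF f g])
  finally show ?thesis .
qed

lemma nn_add4:
  assumes f: "f \<in> borel_measurable M" and g: "g \<in> borel_measurable M" and h: "h \<in> borel_measurable M"
    and l: "l \<in> borel_measurable M"
  shows "(\<integral>\<^sup>+x. f x + g x + h x + l x \<partial>M) = integral\<^sup>N M f + integral\<^sup>N M g + integral\<^sup>N M h + integral\<^sup>N M l"
proof -
  have "(\<integral>\<^sup>+x. f x + g x + h x + l x \<partial>M) = (\<integral>\<^sup>+x. f x + g x + h x \<partial>M) + integral\<^sup>N M l"
    by (rule nn_integral_add[OF borel_measurable_add[OF borel_measurable_add[OF f g] h] l])
  also have "(\<integral>\<^sup>+x. f x + g x + h x \<partial>M) = integral\<^sup>N M f + integral\<^sup>N M g + integral\<^sup>N M h"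
    by (rule nn_add3[OF f g h])
  finally show ?thesis .
qed

lemma enn_div1: "x / N = 1 \<Longrightarrow> 0 < N \<Longrightarrow> N < \<infinity> \<Longrightarrow> x = (N::ennreal)"
  by (simp add: divide_eq_1_ennreal)

theorem mainTheorem6:
  fixes \<nu> :: "'a measure" and T :: "'b measure"
    and k :: "'b \<Rightarrow> 'a \<Rightarrow> real" and p :: "'a \<Rightarrow> real"
    and \<alpha> \<eta> \<kappa> :: real and \<mu>bar :: "'b measure"
  assumes sf: "sigma_finite_measure \<nu>"
    and k_meas: "(\<lambda>(\<theta>, y). k \<theta> y) \<in> borel_measurable (T \<Otimes>\<^sub>M \<nu>)"
    and k_pos: "\<And>\<theta> y. \<theta> \<in> space T \<Longrightarrow> y \<in> space \<nu> \<Longrightarrow> k \<theta> y > 0"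
    and k_int: "\<And>\<theta>. \<theta> \<in> space T \<Longrightarrow> (\<integral>\<^sup>+ y. ennreal (k \<theta> y) \<partial>\<nu>) = 1"
    and p_meas: "p \<in> borel_measurable \<nu>"
    and p_pos: "\<And>y. y \<in> space \<nu> \<Longrightarrow> p y > 0"
    and p_int: "(\<integral>\<^sup>+ y. ennreal (p y) \<partial>\<nu>) < \<infinity>"
    and alpha: "\<alpha> \<noteq> 1" and eta: "\<eta> > 0" and kappa: "(\<alpha> - 1) * \<kappa> \<ge> 0"
    and mu_prob: "prob_space \<mu>bar" and mu_sets: "sets \<mu>bar = sets T"
    and Psi_fin: "Psi \<alpha> k \<nu> p \<mu>bar < \<infinity>"
    and norm_pos: "0 < normI \<alpha> \<eta> \<kappa> k \<nu> p \<mu>bar"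
    and norm_fin: "normI \<alpha> \<eta> \<kappa> k \<nu> p \<mu>bar < \<infinity>"
    and fixed: "I_alpha \<alpha> \<eta> \<kappa> k \<nu> p \<mu>bar = \<mu>bar"
  shows "Psi \<alpha> k \<nu> p \<mu>bar = (INF \<zeta> \<in> M1_dom T \<mu>bar. Psi \<alpha> k \<nu> p \<zeta>)
    \<and> (\<forall>\<zeta> \<in> M1_dom T \<mu>bar. Psi \<alpha> k \<nu> p \<zeta> = Psi \<alpha> k \<nu> p \<mu>bar
          \<longrightarrow> (\<forall>A \<in> sets \<nu>. muK k \<nu> \<mu>bar A = muK k \<nu> \<zeta> A))"
proof -
  interpret PD \<nu> T k by (rule PD.intro[OF sf k_meas k_pos k_int])
  interpret M: prob_space \<mu>bar by (rule mu_prob)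
  interpret N: sigma_finite_measure \<nu> by (rule sf)
  note p_meas[measurable]
  have spM: "space \<mu>bar = space T" using mu_sets by (rule sets_eq_imp_space_eq)
  define a where "a = \<bar>\<alpha>-1\<bar>"
  have a0: "a > 0" using alpha by (simp add: a_def)
  define u where "u = muk k \<mu>bar"
  have u_meas[measurable]: "u \<in> borel_measurable \<nu>" using muk_meas[OF mu_prob mu_sets] by (simp add: u_def)
  define G where "G y = (u y / p y) powr (\<alpha>-1) / a" for y
  have G_meas[measurable]: "G \<in> borel_measurable \<nu>" unfolding G_def[abs_def] by measurable
  have G0: "G y \<ge> 0" for y using a0 by (simp add: G_def)
  define bG where "bG \<theta> = (\<integral>\<^sup>+y. ennreal (k \<theta> y * G y) \<partial>\<nu>)" for \<theta>
  define d where "d = (\<alpha>-1)*\<kappa>"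
  define e where "e = \<eta>/(1-\<alpha>)"
  define NN where "NN = normI \<alpha> \<eta> \<kappa> k \<nu> p \<mu>bar"
  have e0: "e \<noteq> 0" using eta alpha by (simp add: e_def)
  have km[measurable]: "(\<lambda>x. k (fst x) (snd x)) \<in> borel_measurable (\<mu>bar \<Otimes>\<^sub>M \<nu>)"
    by (rule kQ_meas'[OF mu_prob mu_sets])
  have bG_meas[measurable]: "bG \<in> borel_measurable \<mu>bar"
  proof -
    have "(\<lambda>x. ennreal (k (fst x) (snd x) * G (snd x))) \<in> borel_measurable (\<mu>bar \<Otimes>\<^sub>M \<nu>)"
      by measurable
    then have "case_prod (\<lambda>\<theta> y. ennreal (k \<theta> y * G y)) \<in> borel_measurable (\<mu>bar \<Otimes>\<^sub>M \<nu>)"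
      by (simp add: case_prod_beta')
    from N.borel_measurable_nn_integral[OF this] show ?thesis unfolding bG_def[abs_def] .
  qed
  have Gam_eq: "Gam \<alpha> \<eta> (b_mu \<alpha> k \<nu> p \<mu>bar \<theta> + ereal \<kappa>) = Hf a d e (bG \<theta>)" if th: "\<theta> \<in> space \<mu>bar" for \<theta>
  proof -
    have "ereal (\<alpha>-1) * (b_mu \<alpha> k \<nu> p \<mu>bar \<theta> + ereal \<kappa>) + 1 = ereal a * enn2ereal (bG \<theta>) + ereal d"
      using b_rel[OF alpha p_meas mu_prob mu_sets, of \<theta> \<kappa>] th spM
      unfolding bG_def G_def u_def a_def d_def by simp
    then show ?thesis unfolding e_def by (rule Gam_H[OF _ a0]) (use kappa d_def in simp)
  qed
  have dens: "density \<mu>bar (\<lambda>\<theta>. Hf a d e (bG \<theta>) / NN) = density \<mu>bar (\<lambda>_. 1)"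
  proof -
    have "density \<mu>bar (\<lambda>\<theta>. Hf a d e (bG \<theta>) / NN)
        = density \<mu>bar (\<lambda>\<theta>. Gam \<alpha> \<eta> (b_mu \<alpha> k \<nu> p \<mu>bar \<theta> + ereal \<kappa>) / normI \<alpha> \<eta> \<kappa> k \<nu> p \<mu>bar)"
      unfolding density_def NN_def
      by (intro arg_cong[where f="measure_of (space \<mu>bar) (sets \<mu>bar)"] ext nn_integral_cong)
         (simp add: Gam_eq)
    also have "\<dots> = \<mu>bar" using fixed unfolding I_alpha_def .
    finally show ?thesis by (simp add: density_1)
  qed
  have AE1: "AE \<theta> in \<mu>bar. Hf a d e (bG \<theta>) / NN = 1"
  proof -
    have m1: "(\<lambda>\<theta>. Hf a d e (bG \<theta>) / NN) \<in> borel_measurable \<mu>bar" by measurable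
    show ?thesis by (subst M.density_unique_iff[OF m1 borel_measurable_const, symmetric]) (rule dens)
  qed
  define C0 where "C0 = ((enn2real NN) powr (1/e) - d) / a"
  have NNp: "0 < NN" "NN < \<infinity>" using norm_pos norm_fin by (simp_all add: NN_def)
  have AEc: "AE \<theta> in \<mu>bar. bG \<theta> = ennreal C0"
    using AE1
  proof eventually_elim
    case (elim \<theta>)
    have "Hf a d e (bG \<theta>) = NN" by (rule enn_div1[OF elim NNp])
    then show ?case unfolding C0_def by (rule Hf_eq[OF _ NNp e0 a0])
  qed
  have intG: "(\<integral>\<^sup>+y. ennreal (muk k Q y * G y) \<partial>\<nu>) = ennreal C0"
    if Qp: "prob_space Q" and Qs: "sets Q = sets T" and AEQ: "AE \<theta> in Q. bG \<theta> = ennreal C0" for Q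
  proof -
    interpret Q: prob_space Q by (rule Qp)
    have "(\<integral>\<^sup>+y. ennreal (muk k Q y * G y) \<partial>\<nu>) = (\<integral>\<^sup>+\<theta>. bG \<theta> \<partial>Q)"
      unfolding bG_def by (rule tonelli_muk[OF Qp Qs G_meas, symmetric])
    also have "\<dots> = (\<integral>\<^sup>+\<theta>. ennreal C0 \<partial>Q)" by (rule nn_integral_cong_AE[OF AEQ])
    also have "\<dots> = ennreal C0" by (simp add: Q.emeasure_space_1)
    finally show ?thesis .
  qed
  have int1a: "(\<integral>\<^sup>+y. ennreal (muk k Q y * (1/a)) \<partial>\<nu>) = ennreal (1/a)"
    if Qp: "prob_space Q" and Qs: "sets Q = sets T" for Q
  proof -
    have "(\<integral>\<^sup>+y. ennreal (muk k Q y * (1/a)) \<partial>\<nu>) = (\<integral>\<^sup>+y. ennreal (muk k Q y) * ennreal (1/a) \<partial>\<nu>)"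
      using a0 by (intro nn_integral_cong ennreal_mult'') simp
    also have "\<dots> = ennreal (1/a)" using muk_int[OF Qp Qs] muk_meas[OF Qp Qs] by (simp add: nn_integral_multc)
    finally show ?thesis .
  qed
  define D where "D \<zeta> y = p y * (f_alpha \<alpha> (muk k \<zeta> y / p y) - f_alpha \<alpha> (u y / p y)
      - f_alpha' \<alpha> (u y / p y) * (muk k \<zeta> y / p y - u y / p y))" for \<zeta> y
  have key: "Psi \<alpha> k \<nu> p \<zeta> = Psi \<alpha> k \<nu> p \<mu>bar + (\<integral>\<^sup>+y. ennreal (D \<zeta> y) \<partial>\<nu>)"
    if Z: "\<zeta> \<in> M1_dom T \<mu>bar" for \<zeta>
  proof -
    have Zp: "prob_space \<zeta>" and Zs: "sets \<zeta> = sets T" and ac: "absolutely_continuous \<mu>bar \<zeta>"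
      using Z by (auto simp: M1_dom_def)
    define v where "v = muk k \<zeta>"
    have v_meas[measurable]: "v \<in> borel_measurable \<nu>" using muk_meas[OF Zp Zs] by (simp add: v_def)
    have AEZ: "AE \<theta> in \<zeta>. bG \<theta> = ennreal C0"
      by (rule absolutely_continuous_AE[OF _ ac AEc]) (simp add: Zs mu_sets)
    have IuG: "(\<integral>\<^sup>+y. ennreal (u y * G y) \<partial>\<nu>) = ennreal C0"
      unfolding u_def by (rule intG[OF mu_prob mu_sets AEc])
    have IvG: "(\<integral>\<^sup>+y. ennreal (v y * G y) \<partial>\<nu>) = ennreal C0"
      unfolding v_def by (rule intG[OF Zp Zs AEZ])
    have Iu: "(\<integral>\<^sup>+y. ennreal (u y * (1/a)) \<partial>\<nu>) = ennreal (1/a)"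
      unfolding u_def by (rule int1a[OF mu_prob mu_sets])
    have Iv: "(\<integral>\<^sup>+y. ennreal (v y * (1/a)) \<partial>\<nu>) = ennreal (1/a)"
      unfolding v_def by (rule int1a[OF Zp Zs])
    have PsiZ: "Psi \<alpha> k \<nu> p \<zeta> = (\<integral>\<^sup>+y. ennreal (f_alpha \<alpha> (v y / p y) * p y) \<partial>\<nu>)"
      unfolding Psi_def v_def ..
    have PsiM: "Psi \<alpha> k \<nu> p \<mu>bar = (\<integral>\<^sup>+y. ennreal (f_alpha \<alpha> (u y / p y) * p y) \<partial>\<nu>)"
      unfolding Psi_def u_def ..
    have ID: "(\<integral>\<^sup>+y. ennreal (D \<zeta> y) \<partial>\<nu>) = (\<integral>\<^sup>+y. ennreal (p y * (f_alpha \<alpha> (v y / p y) - f_alpha \<alpha> (u y / p y)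
      - f_alpha' \<alpha> (u y / p y) * (v y / p y - u y / p y))) \<partial>\<nu>)"
      unfolding D_def v_def ..
    have AEpos: "AE y in \<nu>. u y > 0 \<and> v y > 0 \<and> p y > 0"
      using muk_AE[OF mu_prob mu_sets] muk_AE[OF Zp Zs] AE_space
      by eventually_elim (auto simp: u_def v_def p_pos)
    have Dv: "D \<zeta> y = p y * (f_alpha \<alpha> (v y / p y) - f_alpha \<alpha> (u y / p y)
      - f_alpha' \<alpha> (u y / p y) * (v y / p y - u y / p y))" for y
      unfolding D_def v_def ..
    have mD[measurable]: "(\<lambda>y. ennreal (D \<zeta> y)) \<in> borel_measurable \<nu>" unfolding Dv by measurable
    have mFv[measurable]: "(\<lambda>y. ennreal (f_alpha \<alpha> (v y / p y) * p y)) \<in> borel_measurable \<nu>" by measurable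
    have mFu[measurable]: "(\<lambda>y. ennreal (f_alpha \<alpha> (u y / p y) * p y)) \<in> borel_measurable \<nu>" by measurable
    have muG[measurable]: "(\<lambda>y. ennreal (u y * G y)) \<in> borel_measurable \<nu>" by measurable
    have mvG[measurable]: "(\<lambda>y. ennreal (v y * G y)) \<in> borel_measurable \<nu>" by measurable
    have mua[measurable]: "(\<lambda>y. ennreal (u y * (1/a))) \<in> borel_measurable \<nu>" by measurable
    have mva[measurable]: "(\<lambda>y. ennreal (v y * (1/a))) \<in> borel_measurable \<nu>" by measurable
    have nn: "f_alpha \<alpha> (v y / p y) * p y \<ge> 0" "f_alpha \<alpha> (u y / p y) * p y \<ge> 0"
      "u y * G y \<ge> 0" "v y * G y \<ge> 0" "u y * (1/a) \<ge> 0" "v y * (1/a) \<ge> 0" "D \<zeta> y \<ge> 0"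
      if "u y > 0 \<and> v y > 0 \<and> p y > 0" for y
      using that fa_nonneg[OF alpha, of "v y / p y"] fa_nonneg[OF alpha, of "u y / p y"] G0[of y] a0
        D_nonneg[OF alpha, of "u y" "v y" "p y"]
      by (auto simp: Dv)
    have eq: "Psi \<alpha> k \<nu> p \<zeta> + ennreal C0 + ennreal (1/a)
        = Psi \<alpha> k \<nu> p \<mu>bar + ennreal C0 + ennreal (1/a) + (\<integral>\<^sup>+y. ennreal (D \<zeta> y) \<partial>\<nu>)"
    proof (cases "\<alpha> > 1")
      case True
      have pw: "AE y in \<nu>. ennreal (f_alpha \<alpha> (v y / p y) * p y) + ennreal (u y * G y) + ennreal (v y * (1/a))
          = ennreal (f_alpha \<alpha> (u y / p y) * p y) + ennreal (v y * G y) + ennreal (u y * (1/a)) + ennreal (D \<zeta> y)"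
        using AEpos
      proof eventually_elim
        case (elim y)
        show ?case
        proof (rule enn_sum3)
          show "f_alpha \<alpha> (v y / p y) * p y + u y * G y + v y * (1/a)
            = f_alpha \<alpha> (u y / p y) * p y + v y * G y + u y * (1/a) + D \<zeta> y"
            using elim by (intro ptwise(1)[OF alpha _ _ _ a_def G_def Dv True]) auto
        qed (use nn[OF elim] in auto)
      qed
      have "(\<integral>\<^sup>+y. ennreal (f_alpha \<alpha> (v y / p y) * p y) + ennreal (u y * G y) + ennreal (v y * (1/a)) \<partial>\<nu>)
          = (\<integral>\<^sup>+y. ennreal (f_alpha \<alpha> (u y / p y) * p y) + ennreal (v y * G y) + ennreal (u y * (1/a)) + ennreal (D \<zeta> y) \<partial>\<nu>)"
        by (rule nn_integral_cong_AE[OF pw])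
      then show ?thesis
        unfolding nn_add3[OF mFv muG mva] nn_add4[OF mFu mvG mua mD] PsiZ[symmetric] PsiM[symmetric] IuG IvG Iu Iv .
    next
      case False
      then have a1: "\<alpha> < 1" using alpha by simp
      have pw: "AE y in \<nu>. ennreal (f_alpha \<alpha> (v y / p y) * p y) + ennreal (v y * G y) + ennreal (u y * (1/a))
          = ennreal (f_alpha \<alpha> (u y / p y) * p y) + ennreal (u y * G y) + ennreal (v y * (1/a)) + ennreal (D \<zeta> y)"
        using AEpos
      proof eventually_elim
        case (elim y)
        show ?case
        proof (rule enn_sum3)
          show "f_alpha \<alpha> (v y / p y) * p y + v y * G y + u y * (1/a)
            = f_alpha \<alpha> (u y / p y) * p y + u y * G y + v y * (1/a) + D \<zeta> y"
            using elim by (intro ptwise(2)[OF alpha _ _ _ a_def G_def Dv a1]) auto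
        qed (use nn[OF elim] in auto)
      qed
      have "(\<integral>\<^sup>+y. ennreal (f_alpha \<alpha> (v y / p y) * p y) + ennreal (v y * G y) + ennreal (u y * (1/a)) \<partial>\<nu>)
          = (\<integral>\<^sup>+y. ennreal (f_alpha \<alpha> (u y / p y) * p y) + ennreal (u y * G y) + ennreal (v y * (1/a)) + ennreal (D \<zeta> y) \<partial>\<nu>)"
        by (rule nn_integral_cong_AE[OF pw])
      then show ?thesis
        unfolding nn_add3[OF mFv mvG mua] nn_add4[OF mFu muG mva mD] PsiZ[symmetric] PsiM[symmetric] IuG IvG Iu Iv .
    qed
    define X where "X = ennreal C0 + ennreal (1/a)"
    have X: "X \<noteq> \<infinity>" by (simp add: X_def)
    have "X + Psi \<alpha> k \<nu> p \<zeta> = X + (Psi \<alpha> k \<nu> p \<mu>bar + (\<integral>\<^sup>+y. ennreal (D \<zeta> y) \<partial>\<nu>))"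
      using eq unfolding X_def by (simp add: ac_simps)
    then show ?thesis using X by (simp add: ennreal_add_left_cancel)
  qed
  have Mdom: "\<mu>bar \<in> M1_dom T \<mu>bar" by (simp add: M1_dom_def mu_prob mu_sets absolutely_continuous_def)
  have low: "Psi \<alpha> k \<nu> p \<mu>bar \<le> Psi \<alpha> k \<nu> p \<zeta>" if "\<zeta> \<in> M1_dom T \<mu>bar" for \<zeta>
    unfolding key[OF that] by (rule add_increasing2) auto
  have part1: "Psi \<alpha> k \<nu> p \<mu>bar = (INF \<zeta> \<in> M1_dom T \<mu>bar. Psi \<alpha> k \<nu> p \<zeta>)"
    by (rule antisym) (auto intro!: INF_greatest INF_lower[OF Mdom] low)
  have part2: "\<forall>A \<in> sets \<nu>. muK k \<nu> \<mu>bar A = muK k \<nu> \<zeta> A"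
    if Z: "\<zeta> \<in> M1_dom T \<mu>bar" and eqP: "Psi \<alpha> k \<nu> p \<zeta> = Psi \<alpha> k \<nu> p \<mu>bar" for \<zeta>
  proof
    fix A assume A: "A \<in> sets \<nu>"
    have Zp: "prob_space \<zeta>" and Zs: "sets \<zeta> = sets T"
      using Z by (auto simp: M1_dom_def)
    have mD: "(\<lambda>y. ennreal (D \<zeta> y)) \<in> borel_measurable \<nu>"
      using muk_meas[OF Zp Zs] unfolding D_def by measurable
    have "Psi \<alpha> k \<nu> p \<mu>bar + 0 = Psi \<alpha> k \<nu> p \<mu>bar + (\<integral>\<^sup>+y. ennreal (D \<zeta> y) \<partial>\<nu>)"
      using key[OF Z] eqP by simp
    then have "(\<integral>\<^sup>+y. ennreal (D \<zeta> y) \<partial>\<nu>) = 0" using Psi_fin by (auto simp: ennreal_add_left_cancel)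
    then have AED: "AE y in \<nu>. ennreal (D \<zeta> y) = 0" using nn_integral_0_iff_AE[OF mD] by simp
    have AEuv: "AE y in \<nu>. u y = muk k \<zeta> y"
      using AED muk_AE[OF mu_prob mu_sets] muk_AE[OF Zp Zs] AE_space
    proof eventually_elim
      case (elim y)
      show ?case
      proof (rule ccontr)
        assume ne: "u y \<noteq> muk k \<zeta> y"
        have "y \<in> space \<nu>" using elim by simp
        then have "D \<zeta> y > 0" unfolding D_def
          using elim ne p_pos by (intro D_pos[OF alpha]) (auto simp: u_def)
        then show False using elim by simp
      qed
    qed
    have "muK k \<nu> \<mu>bar A = (\<integral>\<^sup>+y. ennreal (muk k \<mu>bar y * indicator A y) \<partial>\<nu>)"
      by (rule muK_eq[OF mu_prob mu_sets A])
    also have "\<dots> = (\<integral>\<^sup>+y. ennreal (muk k \<zeta> y * indicator A y) \<partial>\<nu>)"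
      using AEuv by (intro nn_integral_cong_AE) (auto simp: u_def)
    also have "\<dots> = muK k \<nu> \<zeta> A"
      by (rule muK_eq[OF Zp Zs A, symmetric])
    finally show "muK k \<nu> \<mu>bar A = muK k \<nu> \<zeta> A" .
  qed
  show ?thesis using part1 part2 by blast
qed

end
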